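(* Let $(s_i)$ be in the dominant chamber. Under the bijection $(s_i)\mapsto(\gamma_1,\ldots,\gamma_{n-1})$ described in the context, the length of $(s_i)$ is $\sum_{i=1}^{n-1} (n-i)\gamma_i$.
   Context: Let $W$ be the affine Weyl group of type $\widetilde{A}_{n-1}$, with vertex set $I$ of its extended Dynkin graph (a cycle on $n$ vertices, indexed by $\mathbb{Z}/n$), acting on configuration space $\mathbb{R}^I$ by the simple reflections $s_i$ (in the basis of fundamental coweights: $s_i$ negates coordinate $i$ and adds $v_i$ to the two adjacent coordinates). For $w\in W$, $l(w)$ denotes the length, i.e. the minimal number of simple reflections whose product is $w$. Let $\tilde{S}_n$ be the set of permutations $i \mapsto s_i$ of the integers such that $s_{i+n} = s_i + n$ and $\sum_{i=1}^n s_i = \sum_{i=1}^n i$. The map $\partial : \tilde{S}_n \to \mathbb{R}^I$, $(\partial s)_i = s_i - s_{i-1}$, is injective with image $W \cdot (1,1,\ldots,1)$; since $W$ acts freely on $(1,\ldots,1)$, this identifies $\tilde{S}_n$ with $W$ (an element $s$ corresponds to the $w\in W$ with $\partial s = w\cdot(1,\ldots,1)$), and the length of $s$ means $l(w)$. Under this identification the dominant chamber consists of those $s$ with $s_1 < s_2 < \cdots < s_n$. Given $(s_i)$ in the dominant chamber, define $(\gamma_1, \ldots, \gamma_{n-1})$ as follows: for $1 \le i \le n-1$, let $U_i$ be the set of integers $t$ with $t < s_{i+1}$ and $t \not\equiv s_{i+1}, s_{i+2}, \ldots, s_n \pmod n$; number its elements $u_0 > u_1 > u_2 > \cdots$; then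 $s_i \in U_i$, and $\gamma_i$ is defined by $s_i = u_{\gamma_i}$. This gives a bijection between the dominant chamber and $\mathbb{Z}_{\geq 0}^{n-1}$. *)

theory Defs
  imports Complex_Main
begin

text \<open>Configuration space \<open>\<real>^I\<close>, I = Z/n, represented by functions \<open>nat \<Rightarrow> real\<close>,
  where coordinate \<open>j\<close> (for \<open>j < n\<close>) is the vertex \<open>j mod n\<close>; coordinates \<open>\<ge> n\<close> are unused
  (kept fixed by the reflections).\<close>

definition simple_refl :: "nat \<Rightarrow> nat \<Rightarrow> (nat \<Rightarrow> real) \<Rightarrow> (nat \<Rightarrow> real)" where
  "simple_refl n i x = (\<lambda>j. if j = i then - x i
      else x j + (if j = (i + 1) mod n then x i else 0)
               + (if j = (i + n - 1) mod n then x i else 0))"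

definition word_act :: "nat \<Rightarrow> nat list \<Rightarrow> (nat \<Rightarrow> real) \<Rightarrow> (nat \<Rightarrow> real)" where
  "word_act n ws x = foldr (simple_refl n) ws x"

definition ones_vec :: "nat \<Rightarrow> (nat \<Rightarrow> real)" where
  "ones_vec n = (\<lambda>j. if j < n then 1 else 0)"

definition affine_perm :: "nat \<Rightarrow> (int \<Rightarrow> int) \<Rightarrow> bool" where
  "affine_perm n s \<longleftrightarrow> bij s \<and> (\<forall>i. s (i + int n) = s i + int n)
     \<and> (\<Sum>i=1..int n. s i) = (\<Sum>i=1..int n. i)"

definition boundary :: "nat \<Rightarrow> (int \<Rightarrow> int) \<Rightarrow> (nat \<Rightarrow> real)" where
  "boundary n s = (\<lambda>j. if j < n then real_of_int (s (int j) - s (int j - 1)) else 0)"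

definition aff_length :: "nat \<Rightarrow> (int \<Rightarrow> int) \<Rightarrow> nat" where
  "aff_length n s = (LEAST k. \<exists>ws. length ws = k \<and> set ws \<subseteq> {..<n}
        \<and> word_act n ws (ones_vec n) = boundary n s)"

definition dominant :: "nat \<Rightarrow> (int \<Rightarrow> int) \<Rightarrow> bool" where
  "dominant n s \<longleftrightarrow> (\<forall>i j. 1 \<le> i \<longrightarrow> i < j \<longrightarrow> j \<le> int n \<longrightarrow> s i < s j)"

definition U_set :: "nat \<Rightarrow> (int \<Rightarrow> int) \<Rightarrow> int \<Rightarrow> int set" where
  "U_set n s i = {t. t < s (i + 1) \<and> (\<forall>k. i + 1 \<le> k \<and> k \<le> int n \<longrightarrow> t mod int n \<noteq> s k mod int n)}"

text \<open>\<open>\<gamma>_i\<close>: the index of \<open>s_i\<close> in the decreasing enumeration \<open>u_0 > u_1 > \<dots>\<close> of \<open>U_i\<close>,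
  i.e. the number of elements of \<open>U_i\<close> exceeding \<open>s_i\<close>.\<close>
definition gamma :: "nat \<Rightarrow> (int \<Rightarrow> int) \<Rightarrow> int \<Rightarrow> nat" where
  "gamma n s i = card {t \<in> U_set n s i. s i < t}"

end

theory Submission
  imports Defs
begin

definition per :: "nat \<Rightarrow> (int \<Rightarrow> int) \<Rightarrow> bool" where
  "per n s \<longleftrightarrow> (\<forall>i. s (i + int n) = s i + int n)"

definition cnt :: "(int \<Rightarrow> int) \<Rightarrow> int \<Rightarrow> nat" where
  "cnt s i = card {j. i < j \<and> s j < s i}"

definition invc :: "nat \<Rightarrow> (int \<Rightarrow> int) \<Rightarrow> nat" where
  "invc n s = (\<Sum>i<n. cnt s (int i + 1))"

lemma per_shift:
  assumes "per n s"
  shows "s (i + m * int n) = s i + m * int n"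
proof (induct m rule: int_induct[where k=0])
  case base then show ?case by simp
next
  case (step1 m)
  have "s (i + (m+1) * int n) = s ((i + m * int n) + int n)" by (simp add: algebra_simps)
  also have "\<dots> = s (i + m * int n) + int n" using assms per_def by blast
  finally show ?case using step1 by (simp add: algebra_simps)
next
  case (step2 m)
  have "s (i + m * int n) = s ((i + (m - 1) * int n) + int n)" by (simp add: algebra_simps)
  also have "\<dots> = s (i + (m-1) * int n) + int n" using assms per_def by blast
  finally show ?case using step2 by (simp add: algebra_simps)
qed

lemma per_cong:
  assumes "per n s" "x mod int n = y mod int n"
  shows "s x = s y + (x - y)"
proof -
  have "int n dvd x - y" using assms(2) by (simp add: mod_eq_dvd_iff)
  then obtain q where q: "x - y = int n * q" by blast
  have "s x = s (y + q * int n)" using q by (simp add: algebra_simps)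
  also have "\<dots> = s y + q * int n" by (rule per_shift[OF assms(1)])
  finally show ?thesis using q by (simp add: algebra_simps)
qed

lemma per_bound:
  assumes "per n s" "n > 0"
  shows "\<exists>M. \<forall>x. \<bar>s x - x\<bar> \<le> M"
proof -
  define M where "M = Max ((\<lambda>x. \<bar>s x - x\<bar>) ` {0..<int n})"
  have "\<bar>s x - x\<bar> \<le> M" for x
  proof -
    have "s x = s (x mod int n) + (x - x mod int n)"
      using per_cong[OF assms(1), of x "x mod int n"] by simp
    moreover have "x mod int n \<in> {0..<int n}" using assms(2) by simp
    ultimately show ?thesis unfolding M_def
      by (smt (verit) Max_ge finite_atLeastLessThan_int finite_imageI imageI)
  qed
  then show ?thesis by blast
qed

lemma fin_cnt:
  assumes "per n s" "n > 0"
  shows "finite {j. i < j \<and> s j < s i}"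
proof -
  obtain M where M: "\<And>x. \<bar>s x - x\<bar> \<le> M" using per_bound[OF assms] by blast
  have "{j. i < j \<and> s j < s i} \<subseteq> {i..i + 2*M}"
  proof
    fix j assume "j \<in> {j. i < j \<and> s j < s i}"
    then have "i < j" "s j < s i" by auto
    moreover have "\<bar>s j - j\<bar> \<le> M" "\<bar>s i - i\<bar> \<le> M" using M by auto
    ultimately show "j \<in> {i..i + 2*M}" by auto
  qed
  then show ?thesis by (rule finite_subset) simp
qed

lemma cnt_per:
  assumes "per n s"
  shows "cnt s (i + int n) = cnt s i"
proof -
  have "{j. i + int n < j \<and> s j < s (i + int n)} = (\<lambda>j. j + int n) ` {j. i < j \<and> s j < s i}"
  proof (rule set_eqI, rule iffI)
    fix j assume "j \<in> {j. i + int n < j \<and> s j < s (i + int n)}"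
    moreover have "s j = s (j - int n) + int n" using assms per_def by (metis diff_add_cancel)
    ultimately show "j \<in> (\<lambda>j. j + int n) ` {j. i < j \<and> s j < s i}"
      using assms per_def by (auto intro!: image_eqI[where x="j - int n"])
  next
    fix j assume "j \<in> (\<lambda>j. j + int n) ` {j. i < j \<and> s j < s i}"
    then show "j \<in> {j. i + int n < j \<and> s j < s (i + int n)}" using assms per_def by auto
  qed
  then show ?thesis unfolding cnt_def by (simp add: card_image inj_on_def)
qed

lemma sum_shift_per:
  assumes "\<And>x. f (x + int n) = (f x :: nat)"
  shows "(\<Sum>i<n. f (a + int i)) = (\<Sum>i<n. f (int i + 1))"
proof -
  have step: "(\<Sum>i<n. f (a + 1 + int i)) = (\<Sum>i<n. f (a + int i))" for a
  proof -
    have "(\<Sum>i<Suc n. f (a + int i)) = f a + (\<Sum>i<n. f (a + 1 + int i))"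
      by (subst sum.lessThan_Suc_shift) (simp add: algebra_simps)
    moreover have "(\<Sum>i<Suc n. f (a + int i)) = (\<Sum>i<n. f (a + int i)) + f (a + int n)"
      by simp
    ultimately show ?thesis using assms[of a] by simp
  qed
  have "(\<Sum>i<n. f (a + int i)) = (\<Sum>i<n. f (1 + int i))"
  proof (induct a rule: int_induct[where k=1])
    case base then show ?case by simp
  next
    case (step1 a) then show ?case using step[of a] by simp
  next
    case (step2 a) then show ?case using step[of "a - 1"] by simp
  qed
  then show ?thesis by (simp add: add.commute)
qed


lemma mod_succ:
  assumes "(N::int) \<ge> 2"
  shows "(a + 1) mod N = (if a mod N = N - 1 then 0 else a mod N + 1)"
proof -
  have "(a + 1) mod N = (a mod N + 1) mod N" by (simp add: mod_add_left_eq)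
  moreover have "0 \<le> a mod N" "a mod N < N" using assms by auto
  ultimately show ?thesis
    by (smt (verit, best) mod_pos_pos_trivial mod_self)
qed

lemma mod_pred:
  assumes "(N::int) \<ge> 2"
  shows "(a - 1) mod N = (if a mod N = 0 then N - 1 else a mod N - 1)"
proof -
  have "(a - 1) mod N = (a mod N - 1) mod N" by (simp add: mod_diff_left_eq)
  moreover have "0 \<le> a mod N" "a mod N < N" using assms by auto
  ultimately show ?thesis
    by (smt (verit, best) mod_pos_pos_trivial minus_mod_self2 mod_add_self2)
qed

definition rr :: "nat \<Rightarrow> nat \<Rightarrow> int \<Rightarrow> int" where
  "rr n k x = (x - int k + 1) mod int n"

definition tau :: "nat \<Rightarrow> nat \<Rightarrow> int \<Rightarrow> int" where
  "tau n k x = (if rr n k x = 0 then x + 1 else if rr n k x = 1 then x - 1 else x)"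

context
  fixes n k :: nat
  assumes n2: "2 \<le> n"
begin

lemma rr_succ: "rr n k (x + 1) = (if rr n k x = int n - 1 then 0 else rr n k x + 1)"
proof -
  have "rr n k (x + 1) = ((x - int k + 1) + 1) mod int n" unfolding rr_def by (simp add: algebra_simps)
  then show ?thesis using mod_succ[of "int n" "x - int k + 1"] n2 unfolding rr_def by simp
qed

lemma rr_pred: "rr n k (x - 1) = (if rr n k x = 0 then int n - 1 else rr n k x - 1)"
proof -
  have "rr n k (x - 1) = ((x - int k + 1) - 1) mod int n" unfolding rr_def by (simp add: algebra_simps)
  then show ?thesis using mod_pred[of "int n" "x - int k + 1"] n2 unfolding rr_def by simp
qed

lemma rr_range: "0 \<le> rr n k x" "rr n k x < int n"
  using n2 unfolding rr_def by auto

lemma rr_per: "rr n k (x + int n) = rr n k x"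
proof -
  have "x + int n - int k + 1 = (x - int k + 1) + int n" by simp
  then show ?thesis unfolding rr_def by (metis mod_add_self2)
qed

lemma tau_inv: "tau n k (tau n k x) = x"
  using n2 unfolding tau_def by (auto simp: rr_succ rr_pred)

lemma tau_per: "tau n k (x + int n) = tau n k x + int n"
  unfolding tau_def by (simp add: rr_per)

lemma tau_bij: "bij (tau n k)"
  by (rule involuntory_imp_bij) (rule tau_inv)

lemma tau_mono_except:
  assumes "i < j" "\<not> (rr n k i = 0 \<and> j = i + 1)"
  shows "tau n k i < tau n k j"
proof -
  consider "j = i + 1" | "j = i + 2" | "j \<ge> i + 3" using assms(1) by linarith
  then show ?thesis
  proof cases
    case 1
    then show ?thesis using assms(2) n2 unfolding tau_def by (auto simp: rr_succ)
  next
    case 2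
    have e: "j = (i + 1) + 1" using 2 by simp
    have "rr n k j = (if rr n k (i+1) = int n - 1 then 0 else rr n k (i+1) + 1)"
      unfolding e by (rule rr_succ)
    moreover have "rr n k (i+1) = (if rr n k i = int n - 1 then 0 else rr n k i + 1)"
      by (rule rr_succ)
    ultimately show ?thesis using 2 n2 rr_range[of i] unfolding tau_def by (auto split: if_splits)
  next
    case 3
    then show ?thesis unfolding tau_def by auto
  qed
qed

lemma rr_base: "rr n k (int k - 1 + int m) = int m mod int n"
  unfolding rr_def by (simp add: algebra_simps)

lemma cnt_comp_image:
  "cnt (s \<circ> tau n k) i = card {j. i < tau n k j \<and> s j < s (tau n k i)}"
proof -
  have "{j. i < j \<and> (s \<circ> tau n k) j < (s \<circ> tau n k) i}
        = tau n k ` {j. i < tau n k j \<and> s j < s (tau n k i)}"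
    by (auto simp: tau_inv intro!: image_eqI[where x="tau n k _"])
  moreover have "inj (tau n k)" using tau_bij bij_is_inj by blast
  ultimately show ?thesis unfolding cnt_def by (simp add: card_image inj_on_subset)
qed

lemma cnt_comp_other:
  assumes "rr n k i \<noteq> 0" "rr n k i \<noteq> 1"
  shows "cnt (s \<circ> tau n k) i = cnt s i"
proof -
  have ti: "tau n k i = i" using assms unfolding tau_def by simp
  have "i < tau n k j \<longleftrightarrow> i < j" for j
  proof
    assume "i < tau n k j"
    then have "tau n k i < tau n k (tau n k j)" using tau_mono_except assms by blast
    then show "i < j" using ti tau_inv by simp
  next
    assume "i < j"
    then have "tau n k i < tau n k j" using tau_mono_except assms by blast
    then show "i < tau n k j" using ti by simp
  qed
  then have "card {j. i < tau n k j \<and> s j < s (tau n k i)} = cnt s i"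
    unfolding cnt_def ti by simp
  then show ?thesis using cnt_comp_image[of s i] by simp
qed

lemma cnt_comp_p:
  assumes "per n s" "rr n k i = 0"
  shows "cnt (s \<circ> tau n k) i = cnt s (i + 1) + of_bool (s i < s (i + 1))"
proof -
  have ti: "tau n k i = i + 1" using assms unfolding tau_def by simp
  have ri1: "rr n k (i + 1) = 1" using assms n2 rr_succ[of i] by simp
  have ti1: "tau n k (i + 1) = i" using ri1 unfolding tau_def by simp
  have "i < tau n k j \<longleftrightarrow> (i + 1 < j \<or> j = i)" for j
  proof
    assume a: "i < tau n k j"
    show "i + 1 < j \<or> j = i"
    proof (rule ccontr)
      assume "\<not> (i + 1 < j \<or> j = i)"
      then consider "j = i + 1" | "j < i" by linarith
      then show False
      proof cases
        case 1 then show False using a ti1 by simp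
      next
        case 2
        have "\<not> (rr n k j = 0 \<and> i = j + 1)" using assms ri1 rr_succ[of j] n2 by auto
        then have "tau n k j < tau n k i" using tau_mono_except 2 by blast
        then show False using a ti by simp
      qed
    qed
  next
    assume "i + 1 < j \<or> j = i"
    then show "i < tau n k j"
    proof
      assume "i + 1 < j"
      then have "tau n k (i+1) < tau n k j" using tau_mono_except ri1 by simp
      then show ?thesis using ti1 by simp
    qed (simp add: ti)
  qed
  then have "{j. i < tau n k j \<and> s j < s (tau n k i)}
       = {j. i + 1 < j \<and> s j < s (i + 1)} \<union> (if s i < s (i + 1) then {i} else {})"
    using ti by auto
  moreover have "finite {j. i + 1 < j \<and> s j < s (i + 1)}" using fin_cnt assms n2 by simp
  ultimately show ?thesis unfolding cnt_comp_image by (simp add: cnt_def)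
qed

lemma cnt_comp_p1:
  assumes "per n s" "rr n k i = 1"
  shows "cnt (s \<circ> tau n k) i + of_bool (s i < s (i - 1)) = cnt s (i - 1)"
proof -
  have ti: "tau n k i = i - 1" using assms unfolding tau_def by simp
  have "i < tau n k j \<longleftrightarrow> i < j" for j
  proof
    assume a: "i < tau n k j"
    then have "tau n k i < tau n k (tau n k j)" using tau_mono_except assms by simp
    then have "i \<le> j" using ti tau_inv by simp
    moreover have "j \<noteq> i" using a ti by auto
    ultimately show "i < j" by simp
  next
    assume a: "i < j"
    then have "tau n k i < tau n k j" using tau_mono_except assms by simp
    moreover have "tau n k j \<noteq> i"
    proof
      assume "tau n k j = i"
      then have "j = tau n k i" using tau_inv by metis
      then show False using a ti by simp
    qed
    ultimately show "i < tau n k j" using ti by simp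
  qed
  then have e1: "{j. i < tau n k j \<and> s j < s (tau n k i)} = {j. i < j \<and> s j < s (i - 1)}"
    using ti by auto
  have e2: "{j. i - 1 < j \<and> s j < s (i - 1)}
       = {j. i < j \<and> s j < s (i - 1)} \<union> (if s i < s (i - 1) then {i} else {})"
    by (rule set_eqI) (case_tac "x = i"; auto)
  have "finite {j. i < j \<and> s j < s (i - 1)}"
    using fin_cnt[OF assms(1), of "i - 1"] n2 by (rule_tac finite_subset[rotated]) auto
  then show ?thesis unfolding cnt_comp_image e1 cnt_def[of s "i - 1"] e2 by simp
qed

lemma per_comp: "per n s \<Longrightarrow> per n (s \<circ> tau n k)"
  unfolding per_def by (simp add: tau_per)

lemma invc_shift: "per n s \<Longrightarrow> invc n s = (\<Sum>i<n. cnt s (a + int i))"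
  unfolding invc_def using sum_shift_per[of "cnt s" n a] cnt_per by simp

lemma invc_swap:
  assumes "per n s"
  shows "invc n (s \<circ> tau n k) + of_bool (s (int k) < s (int k - 1))
       = invc n s + of_bool (s (int k - 1) < s (int k))"
proof -
  define p where "p = int k - 1"
  obtain m where m: "n = Suc (Suc m)" using n2 by (metis add_2_eq_Suc le_Suc_ex)
  have split: "(\<Sum>i<n. f (p + int i)) = f p + f (p + 1) + (\<Sum>i<m. f (p + 2 + int i))" for f :: "int \<Rightarrow> nat"
    unfolding m by (simp only: sum.lessThan_Suc_shift) (simp add: algebra_simps)
  have rest: "cnt (s \<circ> tau n k) (p + 2 + int i) = cnt s (p + 2 + int i)" if "i < m" for i
  proof -
    have "rr n k (p + 2 + int i) = int (i + 2) mod int n" using rr_base[of "i+2"] unfolding p_def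
      by (simp add: algebra_simps)
    also have "\<dots> = int (i + 2)" using that m by simp
    finally show ?thesis by (intro cnt_comp_other) auto
  qed
  have rp: "rr n k p = 0" using rr_base[of 0] unfolding p_def by simp
  have rp1: "rr n k (p + 1) = 1" using rr_base[of 1] n2 unfolding p_def by simp
  have A: "cnt (s \<circ> tau n k) p = cnt s (p + 1) + of_bool (s p < s (p + 1))"
    using cnt_comp_p[OF assms rp] .
  have B: "cnt (s \<circ> tau n k) (p + 1) + of_bool (s (p+1) < s p) = cnt s p"
    using cnt_comp_p1[OF assms rp1] by simp
  have "invc n (s \<circ> tau n k) = (\<Sum>i<n. cnt (s \<circ> tau n k) (p + int i))"
    using invc_shift per_comp assms by blast
  moreover have "invc n s = (\<Sum>i<n. cnt s (p + int i))"
    using invc_shift assms by blast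
  ultimately show ?thesis unfolding split using A B rest p_def by simp
qed


end

lemma small_mod:
  assumes "(N::int) > 0" "-N \<le> a" "a \<le> N"
  shows "a mod N = (if a < 0 then a + N else if a = N then 0 else a)"
proof -
  consider "a < 0" | "a = N" | "0 \<le> a" "a < N" using assms by linarith
  then show ?thesis
  proof cases
    case 1
    have "a mod N = (a + N) mod N" by simp
    also have "\<dots> = a + N" using 1 assms by (intro mod_pos_pos_trivial) auto
    finally show ?thesis using 1 by simp
  next
    case 2 then show ?thesis using assms by simp
  next
    case 3 then show ?thesis by simp
  qed
qed

lemma tau_explicit:
  assumes "2 \<le> n" "k < n" "-1 \<le> x" "x \<le> int n - 1"
  shows "tau n k x = (if x = int k - 1 \<or> (k = 0 \<and> x = int n - 1) then x + 1
     else if x = int k \<or> (int k = int n - 1 \<and> x = -1) then x - 1 else x)"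
proof -
  have "rr n k x = (if x - int k + 1 < 0 then x - int k + 1 + int n
      else if x - int k + 1 = int n then 0 else x - int k + 1)"
    unfolding rr_def using assms by (intro small_mod) auto
  then show ?thesis unfolding tau_def using assms by (simp only:) auto
qed

lemma nat_mod_succ: "(k::nat) < n \<Longrightarrow> (k + 1) mod n = (if k + 1 = n then 0 else k + 1)"
proof (cases "k + 1 = n")
  case True
  have "(k+1) mod n = 0" using True by (metis mod_self)
  then show ?thesis using True by simp
next
  case False
  assume "k < n"
  then have "k + 1 < n" using False by simp
  then show ?thesis using False by simp
qed

lemma nat_mod_pred:
  assumes "(k::nat) < n" shows "(k + n - 1) mod n = (if k = 0 then n - 1 else k - 1)"
proof (cases "k = 0")
  case True
  have "n - 1 < n" using assms by arith
  then show ?thesis using True by simp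
next
  case False
  then have e: "k + n - 1 = (k - 1) + n" using assms by simp
  have "k - 1 < n" using assms by simp
  then have "((k - 1) + n) mod n = k - 1" by simp
  then show ?thesis using False e by simp
qed

lemma key_lemma:
  fixes s :: "int \<Rightarrow> int" and J K N :: int
  assumes "0 \<le> J" "J < N" "0 \<le> K" "K < N" "2 \<le> N"
   and p1: "s (- 1 + N) = s (- 1) + N" "s (- 2 + N) = s (- 2) + N" "s (0 + N) = s 0 + N"
  shows "s (if J = K - 1 \<or> K = 0 \<and> J = N - 1 then J + 1
        else if J = K \<or> K = N - 1 \<and> J = - 1
             then J - 1 else J) -
     s (if J - 1 = K - 1 \<or> K = 0 \<and> J - 1 = N - 1
        then J - 1 + 1
        else if J - 1 = K \<or> K = N - 1 \<and> J - 1 = - 1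
             then J - 1 - 1 else J - 1) =
     (if J = K then - (s (K) - s (K - 1))
      else s (J) - s (J - 1) +
           (if J = (if K + 1 = N then 0 else K + 1)
            then s (K) - s (K - 1) else 0) +
           (if J = (if K = 0 then N - 1 else K - 1)
            then s (K) - s (K - 1)
            else 0))"
proof (cases "J = K")
  case True then show ?thesis using assms by auto
next
  case False
  define a where "a = (J = K - 1 \<or> K = 0 \<and> J = N - 1)"
  define b where "b = (J - 1 = K \<or> K = N - 1 \<and> J = 0)"
  have t1: "(if J = K - 1 \<or> K = 0 \<and> J = N - 1 then J + 1
        else if J = K \<or> K = N - 1 \<and> J = - 1 then J - 1 else J) = (if a then J + 1 else J)"
    using False assms unfolding a_def by auto
  have t2: "(if J - 1 = K - 1 \<or> K = 0 \<and> J - 1 = N - 1 then J - 1 + 1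
        else if J - 1 = K \<or> K = N - 1 \<and> J - 1 = - 1 then J - 1 - 1 else J - 1)
       = (if b then J - 2 else J - 1)"
    using False assms unfolding b_def by auto
  have c: "(J = (if K + 1 = N then 0 else K + 1)) = b" using assms unfolding b_def by auto
  have d: "(J = (if K = 0 then N - 1 else K - 1)) = a" using assms unfolding a_def by auto
  have ea: "a \<Longrightarrow> s (J + 1) - s J = s K - s (K - 1)"
  proof -
    assume a
    then consider "J = K - 1" | "K = 0" "J = N - 1" unfolding a_def by blast
    then show ?thesis
    proof cases
      case 1 then show ?thesis by simp
    next
      case 2 then show ?thesis using p1 by (simp add: add.commute)
    qed
  qed
  have eb: "b \<Longrightarrow> s (J - 1) - s (J - 2) = s K - s (K - 1)"
  proof -
    assume b
    then consider "J = K + 1" | "K = N - 1" "J = 0" unfolding b_def by force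
    then show ?thesis
    proof cases
      case 1 then show ?thesis by simp
    next
      case 2 then show ?thesis using p1 by (simp add: add.commute)
    qed
  qed
  show ?thesis unfolding t1 t2 c d using False ea eb by auto
qed

lemma boundary_swap:
  assumes n2: "2 \<le> n" and kn: "k < n" and ps: "per n s"
  shows "boundary n (s \<circ> tau n k) = simple_refl n k (boundary n s)"
proof (rule ext)
  fix j
  show "boundary n (s \<circ> tau n k) j = simple_refl n k (boundary n s) j"
  proof (cases "j < n")
    case False
    have "(k + 1) mod n < n" "(k + n - 1) mod n < n" using kn by auto
    then show ?thesis using False kn unfolding boundary_def simple_refl_def by auto
  next
    case True
    have p1: "s (-1 + int n) = s (-1) + int n" "s (-2 + int n) = s (-2) + int n"
      "s (0 + int n) = s 0 + int n" using ps unfolding per_def by blast+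
    have t1: "tau n k (int j) = (if int j = int k - 1 \<or> (k = 0 \<and> int j = int n - 1) then int j + 1
     else if int j = int k \<or> (int k = int n - 1 \<and> int j = -1) then int j - 1 else int j)"
      using True n2 kn by (intro tau_explicit) auto
    have t2: "tau n k (int j - 1) = (if int j - 1 = int k - 1 \<or> (k = 0 \<and> int j - 1 = int n - 1) then int j - 1 + 1
     else if int j - 1 = int k \<or> (int k = int n - 1 \<and> int j - 1 = -1) then int j - 1 - 1 else int j - 1)"
      using True n2 kn by (intro tau_explicit) auto
    have key: "s (tau n k (int j)) - s (tau n k (int j - 1)) = (if int j = int k then -(s (int k) - s (int k - 1))
       else (s (int j) - s (int j - 1))
        + (if int j = (if int k + 1 = int n then 0 else int k + 1) then s (int k) - s (int k - 1) else 0)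
        + (if int j = (if int k = 0 then int n - 1 else int k - 1) then s (int k) - s (int k - 1) else 0))"
      unfolding t1 t2 using key_lemma[where J="int j" and K="int k" and N="int n" and s=s] True n2 kn p1
      by simp
    have c1: "(j = (k+1) mod n) = (int j = (if int k + 1 = int n then 0 else int k + 1))"
      unfolding nat_mod_succ[OF kn] by auto
    have c2: "(j = (k + n - 1) mod n) = (int j = (if int k = 0 then int n - 1 else int k - 1))"
      unfolding nat_mod_pred[OF kn] using kn by auto
    have c3: "(j = k) = (int j = int k)" by simp
    note key = key[folded c1 c2 c3]
    have k2: "(k + 1) mod n < n" "(k + n - 1) mod n < n" using kn by auto
    show ?thesis using arg_cong[OF key, of real_of_int] True kn k2
      unfolding boundary_def simple_refl_def by (auto split: if_splits)
  qed
qed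


lemma simple_refl_inv: "simple_refl n w (simple_refl n w x) = x"
  unfolding simple_refl_def by (rule ext) auto

lemma word_act_Cons: "word_act n (w # ws) x = simple_refl n w (word_act n ws x)"
  unfolding word_act_def by simp

lemma per_diff:
  assumes "per n s" "n > 0"
  shows "s x - s (x - 1) = s (x mod int n) - s (x mod int n - 1)"
proof -
  have "s x = s (x mod int n) + (x - x mod int n)"
    using per_cong[OF assms(1), of x "x mod int n"] by simp
  moreover have "(x - 1) mod int n = (x mod int n - 1) mod int n" by (simp add: mod_diff_left_eq)
  then have "s (x - 1) = s (x mod int n - 1) + ((x - 1) - (x mod int n - 1))"
    using per_cong[OF assms(1), of "x - 1" "x mod int n - 1"] by simp
  ultimately show ?thesis by simp
qed

lemma per_diff_all:
  assumes "per n s" "n > 0" "\<And>j. j < n \<Longrightarrow> P (s (int j) - s (int j - 1))"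
  shows "P (s x - s (x - 1))"
proof -
  have "x mod int n = int (nat (x mod int n))" using assms(2) by auto
  moreover have "x mod int n < int n" using assms(2) by auto
  then have "nat (x mod int n) < n" using assms(2) by (simp add: nat_less_iff)
  ultimately show ?thesis using per_diff[OF assms(1,2), of x] assms(3)[of "nat (x mod int n)"] by simp
qed

lemma mono_from_succ:
  fixes s :: "int \<Rightarrow> int"
  assumes "\<And>x. s x < s (x + 1)" "(i::int) < j"
  shows "s i < s j"
  using assms(2)
proof (induct j rule: int_gr_induct)
  case base then show ?case using assms(1) by simp
next
  case (step j) then show ?case using assms(1)[of j] by linarith
qed

lemma invc_zero_if_mono:
  fixes s :: "int \<Rightarrow> int"
  assumes "\<And>x. s x < s (x + 1)"
  shows "invc n s = 0"
proof -
  have "cnt s x = 0" for x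
  proof -
    have "{j. x < j \<and> s j < s x} = {}" using mono_from_succ[where s=s, OF assms] by (auto, fastforce)
    then show ?thesis unfolding cnt_def by (metis card.empty)
  qed
  then show ?thesis unfolding invc_def by simp
qed

lemma invc_zero_boundary:
  assumes n2: "2 \<le> n" and ps: "per n s" and bs: "bij s" and z: "invc n s = 0"
  shows "boundary n s = ones_vec n"
proof -
  have c0: "cnt s x = 0" for x
  proof -
    have "invc n s = (\<Sum>i<n. cnt s (x + int i))" using invc_shift[OF n2 ps] by blast
    then have "(\<Sum>i<n. cnt s (x + int i)) = 0" using z by simp
    then have "cnt s (x + int 0) = 0" using n2 by (simp del: of_nat_0)
    then show ?thesis by simp
  qed
  have inc: "s x < s (x + 1)" for x
  proof -
    have "finite {j. x < j \<and> s j < s x}" using fin_cnt ps n2 by simp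
    then have "{j. x < j \<and> s j < s x} = {}" using c0[of x] unfolding cnt_def by simp
    then have "\<not> s (x + 1) < s x" by auto
    moreover have "s (x + 1) \<noteq> s x" using bs bij_is_inj by (metis inj_eq add_cancel_left_right one_neq_zero)
    ultimately show ?thesis by simp
  qed
  have step: "s (x + 1) = s x + 1" for x
  proof (rule ccontr)
    assume "s (x + 1) \<noteq> s x + 1"
    then have gt: "s (x + 1) > s x + 1" using inc[of x] by simp
    obtain y where y: "s y = s x + 1" using bs by (metis bij_pointE)
    show False
    proof (cases "y \<le> x")
      case True
      then have "s y \<le> s x" using mono_from_succ[where s=s, OF inc, of y x] by (cases "y = x") auto
      then show False using y by simp
    next
      case False
      then have "s (x + 1) \<le> s y" using mono_from_succ[where s=s, OF inc, of "x+1" y] by (cases "y = x + 1") auto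
      then show False using y gt by simp
    qed
  qed
  show ?thesis
  proof (rule ext)
    fix j
    show "boundary n s j = ones_vec n j"
      unfolding boundary_def ones_vec_def using step[of "int j - 1"] by simp
  qed
qed

lemma descent_exists:
  assumes n2: "2 \<le> n" and ps: "per n s" and bs: "bij s" and nz: "invc n s \<noteq> 0"
  shows "\<exists>k<n. s (int k) < s (int k - 1)"
proof (rule ccontr)
  assume "\<not> (\<exists>k<n. s (int k) < s (int k - 1))"
  then have "\<And>k. k < n \<Longrightarrow> 0 < s (int k) - s (int k - 1)"
    using bs bij_is_inj by (metis inj_eq diff_gt_0_iff_gt linorder_neqE_linordered_idom
        diff_ge_0_iff_ge add_diff_cancel_left' diff_0_right diff_self le_less one_neq_zero
        eq_iff_diff_eq_0 diff_diff_eq2)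
  then have d1: "0 < s x - s (x - 1)" for x using per_diff_all[OF ps, of "\<lambda>d. 0 < d"] n2 by simp
  have "s x < s (x + 1)" for x using d1[of "x+1"] by simp
  then have "invc n s = 0" by (rule invc_zero_if_mono)
  then show False using nz by simp
qed

lemma boundary_ones_invc:
  assumes n2: "2 \<le> n" and ps: "per n s" and b: "boundary n s = ones_vec n"
  shows "invc n s = 0"
proof -
  have "s (int j) - s (int j - 1) = 1" if "j < n" for j
  proof -
    have "boundary n s j = ones_vec n j" using b by simp
    then show ?thesis using that unfolding boundary_def ones_vec_def by simp
  qed
  then have d1: "s x - s (x - 1) = 1" for x using per_diff_all[OF ps, of "\<lambda>d. d = 1"] n2 by simp
  have "s x < s (x + 1)" for x using d1[of "x+1"] by simp
  then show ?thesis by (rule invc_zero_if_mono)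
qed

lemma lower_bound:
  assumes n2: "2 \<le> n"
  shows "\<forall>s. per n s \<and> bij s \<and> set ws \<subseteq> {..<n}
     \<and> word_act n ws (ones_vec n) = boundary n s \<longrightarrow> invc n s \<le> length ws"
proof (induct ws)
  case Nil
  then show ?case using boundary_ones_invc[OF n2] by (simp add: word_act_def)
next
  case (Cons w ws)
  show ?case
  proof (intro allI impI)
    fix s assume a: "per n s \<and> bij s \<and> set (w # ws) \<subseteq> {..<n}
       \<and> word_act n (w # ws) (ones_vec n) = boundary n s"
    then have wn: "w < n" and ps: "per n s" and bs: "bij s" and sw: "set ws \<subseteq> {..<n}" by auto
    have "word_act n ws (ones_vec n) = simple_refl n w (boundary n s)"
      using a simple_refl_inv word_act_Cons by metis
    also have "\<dots> = boundary n (s \<circ> tau n w)" using boundary_swap[OF n2 wn ps] by simp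
    finally have "invc n (s \<circ> tau n w) \<le> length ws"
      using Cons sw per_comp[OF n2 ps] bij_comp[OF tau_bij[OF n2] bs] by blast
    moreover have "invc n (s \<circ> tau n w) + of_bool (s (int w) < s (int w - 1))
       = invc n s + of_bool (s (int w - 1) < s (int w))" using invc_swap[OF n2 ps] by blast
    ultimately show "invc n s \<le> length (w # ws)" by (auto simp: of_bool_def split: if_splits)
  qed
qed

lemma upper_bound:
  assumes n2: "2 \<le> n"
  shows "\<forall>s. per n s \<and> bij s \<and> invc n s = m \<longrightarrow>
    (\<exists>ws. length ws = m \<and> set ws \<subseteq> {..<n} \<and> word_act n ws (ones_vec n) = boundary n s)"
proof (induct m)
  case 0
  show ?case
  proof (intro allI impI)
    fix s assume "per n s \<and> bij s \<and> invc n s = 0"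
    then show "\<exists>ws. length ws = 0 \<and> set ws \<subseteq> {..<n} \<and> word_act n ws (ones_vec n) = boundary n s"
      using invc_zero_boundary[OF n2] by (auto simp: word_act_def)
  qed
next
  case (Suc m)
  show ?case
  proof (intro allI impI)
    fix s assume a: "per n s \<and> bij s \<and> invc n s = Suc m"
    then have ps: "per n s" and bs: "bij s" by auto
    obtain k where kn: "k < n" and d: "s (int k) < s (int k - 1)"
      using descent_exists[OF n2 ps bs] a by auto
    have "invc n (s \<circ> tau n k) + of_bool (s (int k) < s (int k - 1))
       = invc n s + of_bool (s (int k - 1) < s (int k))" using invc_swap[OF n2 ps] by blast
    then have "invc n (s \<circ> tau n k) = m" using a d by simp
    then obtain ws where ws: "length ws = m" "set ws \<subseteq> {..<n}"
       "word_act n ws (ones_vec n) = boundary n (s \<circ> tau n k)"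
      using Suc per_comp[OF n2 ps] bij_comp[OF tau_bij[OF n2] bs] by blast
    have "word_act n (k # ws) (ones_vec n) = simple_refl n k (boundary n (s \<circ> tau n k))"
      using ws word_act_Cons by metis
    also have "\<dots> = boundary n s" using boundary_swap[OF n2 kn ps] simple_refl_inv by metis
    finally show "\<exists>ws. length ws = Suc m \<and> set ws \<subseteq> {..<n} \<and> word_act n ws (ones_vec n) = boundary n s"
      using ws kn by (intro exI[of _ "k # ws"]) auto
  qed
qed

lemma aff_length_invc:
  assumes n2: "2 \<le> n" and ap: "affine_perm n s"
  shows "aff_length n s = invc n s"
proof -
  have ps: "per n s" and bs: "bij s" using ap unfolding affine_perm_def per_def by auto
  show ?thesis unfolding aff_length_def
  proof (rule Least_equality)
    show "\<exists>ws. length ws = invc n s \<and> set ws \<subseteq> {..<n} \<and> word_act n ws (ones_vec n) = boundary n s"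
      using upper_bound[OF n2] ps bs by blast
  next
    fix y assume "\<exists>ws. length ws = y \<and> set ws \<subseteq> {..<n} \<and> word_act n ws (ones_vec n) = boundary n s"
    then show "invc n s \<le> y" using lower_bound[OF n2] ps bs by blast
  qed
qed


lemma bracket:
  fixes s :: "int \<Rightarrow> int"
  assumes "1 \<le> b"
  shows "s 1 < v \<longrightarrow> v < s (int b) \<longrightarrow> (\<forall>k. 1 \<le> k \<and> k \<le> int b \<longrightarrow> v \<noteq> s k)
     \<longrightarrow> (\<exists>i. 1 \<le> i \<and> i < int b \<and> s i < v \<and> v < s (i + 1))"
  using assms
proof (induct b rule: nat_induct_at_least)
  case base then show ?case by simp
next
  case (Suc b)
  show ?case
  proof (intro impI)
    assume a: "s 1 < v" "v < s (int (Suc b))" "\<forall>k. 1 \<le> k \<and> k \<le> int (Suc b) \<longrightarrow> v \<noteq> s k"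
    show "\<exists>i. 1 \<le> i \<and> i < int (Suc b) \<and> s i < v \<and> v < s (i + 1)"
    proof (cases "v < s (int b)")
      case True
      then obtain i where "1 \<le> i \<and> i < int b \<and> s i < v \<and> v < s (i + 1)"
        using Suc a by auto
      then show ?thesis by (intro exI[of _ i]) auto
    next
      case False
      moreover have "v \<noteq> s (int b)" using a(3) Suc(1) by auto
      ultimately have "s (int b) < v" by linarith
      then show ?thesis using a(2) Suc(1) by (intro exI[of _ "int b"]) (auto simp: ac_simps)
    qed
  qed
qed

lemma sum_exch:
  fixes g :: "nat \<Rightarrow> nat"
  shows "(\<Sum>i<n. \<Sum>l\<in>{1..i}. g l) = (\<Sum>l\<in>{1..n-1}. (n - l) * g l)"
proof (induct n)
  case 0 then show ?case by simp
next
  case (Suc n)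
  have A: "(\<Sum>l\<in>{1..n}. (Suc n - l) * g l) = (\<Sum>l\<in>{1..n}. (n - l) * g l) + (\<Sum>l\<in>{1..n}. g l)"
    by (simp add: sum.distrib[symmetric] Suc_diff_le algebra_simps)
  have B: "(\<Sum>l\<in>{1..n}. (n - l) * g l) = (\<Sum>l\<in>{1..n-1}. (n - l) * g l)"
  proof (cases n)
    case 0 then show ?thesis by simp
  next
    case (Suc m)
    then have "{1..n} = insert n {1..n-1}" by auto
    moreover have "n \<notin> {1..n-1}" using \<open>n = Suc m\<close> by simp
    ultimately show ?thesis by simp
  qed
  show ?case using Suc A B by simp
qed

context
  fixes n :: nat and s :: "int \<Rightarrow> int"
  assumes n2: "2 \<le> n" and ps: "per n s" and bs: "bij s" and dom: "dominant n s"
begin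

lemma domle: "1 \<le> i \<Longrightarrow> i \<le> j \<Longrightarrow> j \<le> int n \<Longrightarrow> s i \<le> s j"
  using dom unfolding dominant_def by (cases "i = j") (auto simp: less_imp_le)

lemma domlt: "1 \<le> i \<Longrightarrow> i < j \<Longrightarrow> j \<le> int n \<Longrightarrow> s i < s j"
  using dom unfolding dominant_def by auto

lemma sinj: "s x = s y \<longleftrightarrow> x = y"
  using bs bij_is_inj inj_eq by metis

lemma rep: "\<exists>r q. 1 \<le> r \<and> r \<le> int n \<and> j = r + q * int n \<and> s j = s r + q * int n"
proof -
  define r where "r = (j - 1) mod int n + 1"
  define q where "q = (j - 1) div int n"
  have j: "j = r + q * int n" unfolding r_def q_def using mod_div_mult_eq[of "j - 1" "int n"] by linarith
  have m1: "(j - 1) mod int n < int n" "0 \<le> (j - 1) mod int n" using n2 by simp_all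
  have "1 \<le> r" "r \<le> int n" unfolding r_def using m1 by linarith+
  moreover have "s j = s r + q * int n" unfolding j by (rule per_shift[OF ps])
  ultimately show ?thesis using j by blast
qed

lemma big_gt: "int n < j \<Longrightarrow> \<exists>r. 1 \<le> r \<and> r \<le> int n \<and> s j \<ge> s r + int n
     \<and> s j mod int n = s r mod int n"
proof -
  assume jn: "int n < j"
  obtain r q where rq: "1 \<le> r" "r \<le> int n" "j = r + q * int n" "s j = s r + q * int n" using rep by blast
  have "q \<ge> 1"
  proof (rule ccontr)
    assume "\<not> q \<ge> 1"
    then have "q * int n \<le> 0" using n2 by (simp add: mult_nonpos_nonneg)
    then show False using rq jn by simp
  qed
  then have "q * int n \<ge> int n" using n2 by simp
  then show ?thesis using rq by (intro exI[of _ r]) auto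
qed

lemma res_inj: "1 \<le> r \<Longrightarrow> r \<le> int n \<Longrightarrow> 1 \<le> k \<Longrightarrow> k \<le> int n
   \<Longrightarrow> s r mod int n = s k mod int n \<Longrightarrow> r = k"
proof -
  assume a: "1 \<le> r" "r \<le> int n" "1 \<le> k" "k \<le> int n" "s r mod int n = s k mod int n"
  then have "int n dvd s r - s k" by (simp add: mod_eq_dvd_iff)
  then obtain c where c: "s r - s k = int n * c" by blast
  have "s (k + c * int n) = s k + c * int n" by (rule per_shift[OF ps])
  then have "s (k + c * int n) = s r" using c by (simp add: algebra_simps)
  then have rk: "r = k + c * int n" using sinj by simp
  have "c = 0"
  proof (rule ccontr)
    assume "c \<noteq> 0"
    then have "\<bar>c * int n\<bar> \<ge> int n" using n2 by (simp add: abs_mult)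
    then show False using rk a by linarith
  qed
  then show "r = k" using rk by simp
qed

definition GG :: "int \<Rightarrow> int set" where
  "GG i = {j. int n < j \<and> s i < s j \<and> s j < s (i + 1)}"

lemma GG_fin: "1 \<le> i \<Longrightarrow> i + 1 \<le> int n \<Longrightarrow> finite (GG i)"
proof -
  assume "1 \<le> i" "i + 1 \<le> int n"
  then have "GG i \<subseteq> {j. i + 1 < j \<and> s j < s (i + 1)}" unfolding GG_def by auto
  moreover have "finite {j. i + 1 < j \<and> s j < s (i + 1)}" using fin_cnt ps n2 by simp
  ultimately show ?thesis by (rule finite_subset)
qed

lemma cnt_dom:
  assumes "1 \<le> b" "b \<le> n"
  shows "cnt s (int b) = (\<Sum>l\<in>{1..<b}. card (GG (int l)))"
proof -
  have e1: "{j. int b < j \<and> s j < s (int b)} = {j. int n < j \<and> s j < s (int b)}"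
  proof (rule set_eqI, rule iffI)
    fix j assume a: "j \<in> {j. int b < j \<and> s j < s (int b)}"
    have "int n < j"
    proof (rule ccontr)
      assume "\<not> int n < j"
      then have "s (int b) < s j" using a assms domlt[of "int b" j] by simp
      then show False using a by simp
    qed
    then show "j \<in> {j. int n < j \<and> s j < s (int b)}" using a by simp
  qed (use assms in auto)
  have e2: "{j. int n < j \<and> s j < s (int b)} = (\<Union>l\<in>{1..<b}. GG (int l))"
  proof (rule set_eqI, rule iffI)
    fix j assume a: "j \<in> {j. int n < j \<and> s j < s (int b)}"
    then have jn: "int n < j" and jb: "s j < s (int b)" by auto
    obtain r where r: "1 \<le> r" "r \<le> int n" "s j \<ge> s r + int n" using big_gt[OF jn] by blast
    have "s 1 \<le> s r" using r domle[of 1 r] by simp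
    then have s1: "s 1 < s j" using r n2 by simp
    have "\<forall>k. 1 \<le> k \<and> k \<le> int b \<longrightarrow> s j \<noteq> s k" using jn assms sinj by auto
    then obtain i where i: "1 \<le> i" "i < int b" "s i < s j" "s j < s (i + 1)"
      using bracket[of b s "s j"] assms s1 jb by auto
    then have "j \<in> GG (int (nat i))" using jn unfolding GG_def by simp
    moreover have "nat i \<in> {1..<b}" using i by auto
    ultimately show "j \<in> (\<Union>l\<in>{1..<b}. GG (int l))" by blast
  next
    fix j assume "j \<in> (\<Union>l\<in>{1..<b}. GG (int l))"
    then obtain l where l: "l \<in> {1..<b}" "j \<in> GG (int l)" by blast
    then have "s (int l + 1) \<le> s (int b)" using assms domle[of "int l + 1" "int b"] by simp
    then show "j \<in> {j. int n < j \<and> s j < s (int b)}" using l unfolding GG_def by auto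
  qed
  have disj: "GG (int l) \<inter> GG (int l') = {}" if "l \<in> {1..<b}" "l' \<in> {1..<b}" "l \<noteq> l'" for l l'
  proof -
    have "False" if "j \<in> GG (int a)" "j \<in> GG (int a')" "a < a'" "a \<in> {1..<b}" "a' \<in> {1..<b}" for j a a'
    proof -
      have "s (int a + 1) \<le> s (int a')" using that assms domle[of "int a + 1" "int a'"] by simp
      then show False using that unfolding GG_def by simp
    qed
    then show ?thesis using that by (metis disjoint_iff linorder_neqE_nat)
  qed
  have fin: "finite (GG (int l))" if "l \<in> {1..<b}" for l using GG_fin that assms by simp
  have "cnt s (int b) = card (\<Union>l\<in>{1..<b}. GG (int l))" unfolding cnt_def e1 e2 ..
  also have "\<dots> = (\<Sum>l\<in>{1..<b}. card (GG (int l)))"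
    by (rule card_UN_disjoint) (use fin disj in auto)
  finally show ?thesis .
qed

lemma gamma_GG:
  assumes "1 \<le> i" "i + 1 \<le> int n"
  shows "gamma n s i = card (GG i)"
proof -
  have "{t \<in> U_set n s i. s i < t} = s ` GG i"
  proof (rule set_eqI, rule iffI)
    fix t assume a: "t \<in> {t \<in> U_set n s i. s i < t}"
    obtain j where tj: "t = s j" using bs by (metis bij_pointE)
    obtain r q where rq: "1 \<le> r" "r \<le> int n" "j = r + q * int n" "s j = s r + q * int n" using rep by blast
    have "s j mod int n = s r mod int n" using rq(4) by simp
    then have "\<not> (i + 1 \<le> r)" using a tj rq unfolding U_set_def by auto
    then have "s r \<le> s i" using rq domle[of r i] assms by simp
    then have "q \<ge> 1"
      using a tj rq n2 by (smt (verit, ccfv_SIG) mem_Collect_eq mult_le_0_iff of_nat_0_le_iff)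
    then have "int n < j" using rq n2 by (smt (verit) mult_le_cancel_right1 of_nat_0_le_iff)
    then have "j \<in> GG i" using a tj unfolding GG_def U_set_def by auto
    then show "t \<in> s ` GG i" using tj by blast
  next
    fix t assume "t \<in> s ` GG i"
    then obtain j where j: "j \<in> GG i" "t = s j" by blast
    then have jn: "int n < j" and l: "s i < s j" "s j < s (i + 1)" unfolding GG_def by auto
    obtain r where r: "1 \<le> r" "r \<le> int n" "s j \<ge> s r + int n" "s j mod int n = s r mod int n"
      using big_gt[OF jn] by blast
    have "t mod int n \<noteq> s k mod int n" if "i + 1 \<le> k" "k \<le> int n" for k
    proof
      assume "t mod int n = s k mod int n"
      then have "r = k" using res_inj[of r k] r that assms j by simp
      moreover have "s (i + 1) \<le> s k" using that assms domle[of "i+1" k] by simp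
      ultimately show False using r l n2 by simp
    qed
    then show "t \<in> {t \<in> U_set n s i. s i < t}" using j l unfolding U_set_def by auto
  qed
  moreover have "inj_on s (GG i)" using bs bij_is_inj inj_on_subset by blast
  ultimately show ?thesis unfolding gamma_def by (simp add: card_image)
qed

lemma invc_dom: "invc n s = (\<Sum>i=1..n-1. (n - i) * gamma n s (int i))"
proof -
  have "invc n s = (\<Sum>i<n. \<Sum>l\<in>{1..i}. card (GG (int l)))"
    unfolding invc_def
  proof (rule sum.cong)
    fix i assume "i \<in> {..<n}"
    then have "cnt s (int (Suc i)) = (\<Sum>l\<in>{1..<Suc i}. card (GG (int l)))"
      by (intro cnt_dom) auto
    then show "cnt s (int i + 1) = (\<Sum>l\<in>{1..i}. card (GG (int l)))"
      by (simp add: atLeastLessThanSuc_atLeastAtMost ac_simps)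
  qed simp
  also have "\<dots> = (\<Sum>l\<in>{1..n-1}. (n - l) * card (GG (int l)))" by (rule sum_exch)
  also have "\<dots> = (\<Sum>i=1..n-1. (n - i) * gamma n s (int i))"
  proof (rule sum.cong)
    fix i assume "i \<in> {1..n-1}"
    then show "(n - i) * card (GG (int i)) = (n - i) * gamma n s (int i)"
      using gamma_GG[of "int i"] n2 by auto
  qed simp
  finally show ?thesis .
qed

end


theorem proposition5p3:
  fixes n :: nat and s :: "int \<Rightarrow> int"
  assumes "n \<ge> 2" and "affine_perm n s" and "dominant n s"
  shows "aff_length n s = (\<Sum>i=1..n-1. (n - i) * gamma n s (int i))"
proof -
  have ps: "per n s" and bs: "bij s" using assms(2) unfolding affine_perm_def per_def by auto
  show ?thesis using aff_length_invc[OF assms(1,2)] invc_dom[OF assms(1) ps bs assms(3)] by simp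
qed

end
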